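(* If $L$ is a finite ranked lattice, then $$\mathcal{M}(L,t)=t^{\mathrm{rk}(L)}\sum_{y\in L}t^{\mathrm{rk}(L)-\mathrm{rk}(y)}\,\chi(L^y,t)\,\chi\big((L^{\mathrm{op}})^y,t^{-1}\big).$$
   Context: $L$ has minimum $\hat 0$, maximum $\hat 1$, rank function $\mathrm{rk}$ with $\mathrm{rk}(\hat 0)=0$, and $\mathrm{rk}(L)=\mathrm{rk}(\hat 1)$. $L^{\mathrm{op}}$ is $L$ with reversed order. For $y\in L$, $L^y=\{x\in L: x\ge y\}$ and $(L^{\mathrm{op}})^y=\{x\in L: x\le y\}$ ordered by the reverse of the order of $L$. For a finite ranked lattice $K$ with minimum $\hat 0_K$ and Möbius function $\mu_K$ ($\mu_K(u,u)=1$, $\sum_{u\le a\le v}\mu_K(u,a)=0$ for $u<v$), the characteristic polynomial is $\chi(K,t)=\sum_{x\in K}\mu_K(\hat 0_K,x)\,t^{\mathrm{rk}(K)-\mathrm{rk}_K(x)}$, where $\mathrm{rk}_K$ is the rank function of $K$ (with $\mathrm{rk}_K(\hat 0_K)=0$) and $\mathrm{rk}(K)$ its maximum. Let $\rho(x,y,z)=3\,\mathrm{rk}(L)-\mathrm{rk}(x)-\mathrm{rk}(y)-\mathrm{rk}(z)$, $\delta_3(x,y,z)=1$ if $x=y=z$ and $0$ otherwise, $J$ the unique integer-valued function on triples $x\le y\le z$ of $L$ with $\sum_{x\le a\le y\le b\le z}J(a,y,b)=\delta_3(x,y,z)$ for all $x\le y\le z$, and $\mathcal{M}(L,t)=\sum_{x\le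 y\le z}J(x,y,z)\,t^{\rho(x,y,z)}$. *)

theory Defs
  imports Main
begin

definition mobius_on :: "'a set \<Rightarrow> ('a \<Rightarrow> 'a \<Rightarrow> bool) \<Rightarrow> 'a \<Rightarrow> 'a \<Rightarrow> int" where
  "mobius_on S le = (THE m.
      (\<forall>u\<in>S. \<forall>v\<in>S. le u v \<longrightarrow>
          (u = v \<longrightarrow> m u v = 1) \<and>
          (u \<noteq> v \<longrightarrow> (\<Sum>a\<in>{a\<in>S. le u a \<and> le a v}. m u a) = 0)) \<and>
      (\<forall>u v. \<not> (u \<in> S \<and> v \<in> S \<and> le u v) \<longrightarrow> m u v = 0))"

definition rank_on :: "'a set \<Rightarrow> ('a \<Rightarrow> 'a \<Rightarrow> bool) \<Rightarrow> 'a \<Rightarrow> 'a \<Rightarrow> nat" where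
  "rank_on S le z x = Max {n. \<exists>c :: nat \<Rightarrow> 'a. c 0 = z \<and> c n = x \<and>
       (\<forall>i\<le>n. c i \<in> S) \<and> (\<forall>i<n. le (c i) (c (Suc i)) \<and> c i \<noteq> c (Suc i))}"

definition charpoly_on :: "'a set \<Rightarrow> ('a \<Rightarrow> 'a \<Rightarrow> bool) \<Rightarrow> 'a \<Rightarrow> 'b::field \<Rightarrow> 'b" where
  "charpoly_on S le z t =
     (\<Sum>x\<in>S. of_int (mobius_on S le z x) *
        t ^ (Max (rank_on S le z ` S) - rank_on S le z x))"

definition covers :: "'a::order \<Rightarrow> 'a \<Rightarrow> bool" where
  "covers x y \<longleftrightarrow> x < y \<and> \<not> (\<exists>w. x < w \<and> w < y)"

definition rank_function :: "('a::bounded_lattice \<Rightarrow> nat) \<Rightarrow> bool" where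
  "rank_function rk \<longleftrightarrow> rk bot = 0 \<and> (\<forall>x y. covers x y \<longrightarrow> rk y = rk x + 1)"

definition Jfun :: "'a::order \<Rightarrow> 'a \<Rightarrow> 'a \<Rightarrow> int" where
  "Jfun = (THE J.
      (\<forall>x y z. x \<le> y \<and> y \<le> z \<longrightarrow>
         (\<Sum>a\<in>{a. x \<le> a \<and> a \<le> y}. \<Sum>b\<in>{b. y \<le> b \<and> b \<le> z}. J a y b)
           = (if x = y \<and> y = z then 1 else 0)) \<and>
      (\<forall>x y z. \<not> (x \<le> y \<and> y \<le> z) \<longrightarrow> J x y z = 0))"

definition Mpoly :: "('a::{finite,bounded_lattice} \<Rightarrow> nat) \<Rightarrow> 'b::field \<Rightarrow> 'b" where
  "Mpoly rk t = (\<Sum>(x,y,z)\<in>{(x,y,z). x \<le> y \<and> y \<le> z}.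
      of_int (Jfun x y z) * t ^ (3 * rk top - rk x - rk y - rk z))"

end

theory Submission
  imports Defs
begin

function mu :: "'a::{finite,order} \<Rightarrow> 'a \<Rightarrow> int" where
  "mu u v = (if u = v then 1 else if u \<le> v then - (\<Sum>a\<in>{a. u \<le> a \<and> a < v}. mu u a) else 0)"
  by auto
termination
proof (relation "measure (\<lambda>(u,v). card {a::'a. a < v})")
  show "wf (measure (\<lambda>(u,v). card {a::'a. a < v}))" by simp
  fix u v a :: 'a
  assume "a \<in> {a. u \<le> a \<and> a < v}"
  hence "{b. b < a} \<subset> {b. b < v}" by auto
  hence "card {b. b < a} < card {b. b < v}" by (simp add: psubset_card_mono)
  thus "((u, a), u, v) \<in> measure (\<lambda>(u,v). card {a. a < v})" by simp
qed

declare mu.simps[simp del]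

function mu' :: "'a::{finite,order} \<Rightarrow> 'a \<Rightarrow> int" where
  "mu' u v = (if u = v then 1 else if u \<le> v then - (\<Sum>a\<in>{a. u < a \<and> a \<le> v}. mu' a v) else 0)"
  by auto
termination
proof (relation "measure (\<lambda>(u,v). card {a::'a. u < a})")
  show "wf (measure (\<lambda>(u,v). card {a::'a. u < a}))" by simp
  fix u v a :: 'a
  assume "a \<in> {a. u < a \<and> a \<le> v}"
  hence "{b. a < b} \<subset> {b. u < b}" by auto
  hence "card {b. a < b} < card {b. u < b}" by (simp add: psubset_card_mono)
  thus "((a, v), u, v) \<in> measure (\<lambda>(u,v). card {a. u < a})" by simp
qed

declare mu'.simps[simp del]

lemma mu_sum:
  fixes u v :: "'a::{finite,order}"
  assumes "u \<le> v"
  shows "(\<Sum>a\<in>{a. u \<le> a \<and> a \<le> v}. mu u a) = (if u = v then 1 else 0)"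
proof (cases "u = v")
  case True
  then have "{a. u \<le> a \<and> a \<le> v} = {u}" by auto
  then show ?thesis using True by (simp add: mu.simps)
next
  case False
  have e: "{a. u \<le> a \<and> a \<le> v} = insert v {a. u \<le> a \<and> a < v}" using assms by auto
  have "(\<Sum>a\<in>{a. u \<le> a \<and> a \<le> v}. mu u a) = mu u v + (\<Sum>a\<in>{a. u \<le> a \<and> a < v}. mu u a)"
    unfolding e by (subst sum.insert) auto
  also have "\<dots> = 0" using False assms by (subst mu.simps) simp
  finally show ?thesis using False by simp
qed

lemma mu'_sum:
  fixes u v :: "'a::{finite,order}"
  assumes "u \<le> v"
  shows "(\<Sum>a\<in>{a. u \<le> a \<and> a \<le> v}. mu' a v) = (if u = v then 1 else 0)"
proof (cases "u = v")
  case True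
  then have "{a. u \<le> a \<and> a \<le> v} = {u}" by auto
  then show ?thesis using True by (simp add: mu'.simps)
next
  case False
  have e: "{a. u \<le> a \<and> a \<le> v} = insert u {a. u < a \<and> a \<le> v}" using assms by auto
  have "(\<Sum>a\<in>{a. u \<le> a \<and> a \<le> v}. mu' a v) = mu' u v + (\<Sum>a\<in>{a. u < a \<and> a \<le> v}. mu' a v)"
    unfolding e by (subst sum.insert) auto
  also have "\<dots> = 0" using False assms by (subst mu'.simps) simp
  finally show ?thesis using False by simp
qed


lemma chain_exists:
  fixes rk :: "'a::{finite,bounded_lattice} \<Rightarrow> nat"
  assumes rf: "rank_function rk"
  shows "x \<le> y \<Longrightarrow> \<exists>c n. c 0 = x \<and> c n = y \<and> (\<forall>i<n. c i < c (Suc i)) \<and> rk y = rk x + n"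
proof (induction "card {v. x \<le> v \<and> v \<le> y}" arbitrary: x rule: less_induct)
  case less
  show ?case
  proof (cases "x = y")
    case True
    then show ?thesis by (intro exI[of _ "\<lambda>_. x"] exI[of _ 0]) simp
  next
    case False
    define S where "S = {w. x < w \<and> w \<le> y}"
    have "y \<in> S" using False less.prems by (auto simp: S_def order.strict_iff_order)
    then have "finite S" "S \<noteq> {}" by auto
    then obtain w where w: "w \<in> S" "\<forall>b\<in>S. b \<le> w \<longrightarrow> w = b"
      using finite_has_minimal by blast
    have cov: "covers x w" unfolding covers_def using w by (auto simp: S_def)
    hence rw: "rk w = rk x + 1" using rf by (simp add: rank_function_def)
    have s1: "{v. w \<le> v \<and> v \<le> y} \<subseteq> {v. x \<le> v \<and> v \<le> y}"
      using w(1) by (auto simp: S_def)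
    have s2: "x \<in> {v. x \<le> v \<and> v \<le> y} - {v. w \<le> v \<and> v \<le> y}"
      using w(1) less.prems by (auto simp: S_def less_le_not_le)
    have "{v. w \<le> v \<and> v \<le> y} \<subset> {v. x \<le> v \<and> v \<le> y}"
      using s1 s2 by blast
    hence "card {v. w \<le> v \<and> v \<le> y} < card {v. x \<le> v \<and> v \<le> y}"
      by (simp add: psubset_card_mono)
    moreover have "w \<le> y" using w(1) by (simp add: S_def)
    ultimately obtain d m where d: "d 0 = w" "d m = y" "\<forall>i<m. d i < d (Suc i)" "rk y = rk w + m"
      using less.hyps by blast
    define c where "c = (\<lambda>i. if i = 0 then x else d (i - 1))"
    have "c 0 = x" "c (Suc m) = y" using d by (auto simp: c_def)
    moreover have "\<forall>i<Suc m. c i < c (Suc i)"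
    proof (intro allI impI)
      fix i assume "i < Suc m"
      show "c i < c (Suc i)"
      proof (cases i)
        case 0 then show ?thesis using d w(1) by (simp add: c_def S_def)
      next
        case (Suc j) then show ?thesis using d \<open>i < Suc m\<close> by (simp add: c_def)
      qed
    qed
    moreover have "rk y = rk x + Suc m" using d rw by simp
    ultimately show ?thesis by blast
  qed
qed

lemma chain_mono:
  fixes c :: "nat \<Rightarrow> 'a::order"
  assumes "\<forall>i<n. c i < c (Suc i)"
  shows "i \<le> j \<Longrightarrow> j \<le> n \<Longrightarrow> c i \<le> c j"
proof (induction j)
  case 0 then show ?case by simp
next
  case (Suc j)
  show ?case
  proof (cases "i = Suc j")
    case True then show ?thesis by simp
  next
    case False
    then have "c i \<le> c j" using Suc by simp
    also have "c j \<le> c (Suc j)" using assms Suc.prems by (simp add: less_imp_le)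
    finally show ?thesis .
  qed
qed

lemma rk_strict:
  fixes rk :: "'a::{finite,bounded_lattice} \<Rightarrow> nat"
  assumes rf: "rank_function rk" and "x < y"
  shows "rk x < rk y"
proof -
  obtain c n where c: "c 0 = x" "c n = y" "\<forall>i<n. c i < c (Suc i)" "rk y = rk x + n"
    using chain_exists[OF rf less_imp_le[OF assms(2)]] by blast
  have "n \<noteq> 0"
  proof
    assume "n = 0" then show False using c assms(2) by simp
  qed
  then show ?thesis using c by simp
qed

lemma rk_mono:
  fixes rk :: "'a::{finite,bounded_lattice} \<Rightarrow> nat"
  assumes rf: "rank_function rk" and "x \<le> y"
  shows "rk x \<le> rk y"
proof -
  have "x = y \<or> x < y" using assms(2) by (auto simp: order.strict_iff_order)
  then show ?thesis using rk_strict[OF rf, of x y] by auto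
qed

lemma chain_rk:
  fixes rk :: "'a::{finite,bounded_lattice} \<Rightarrow> nat"
  assumes rf: "rank_function rk" and "\<forall>i<n. c i < c (Suc i)"
  shows "i \<le> n \<Longrightarrow> rk (c 0) + i \<le> rk (c i)"
proof (induction i)
  case 0 then show ?case by simp
next
  case (Suc i)
  then have "rk (c i) < rk (c (Suc i))" using rk_strict[OF rf] assms(2) by simp
  then show ?case using Suc by simp
qed

lemma chain_rk_down:
  fixes rk :: "'a::{finite,bounded_lattice} \<Rightarrow> nat"
  assumes rf: "rank_function rk" and "\<forall>i<n. c (Suc i) < c i"
  shows "i \<le> n \<Longrightarrow> rk (c i) + i \<le> rk (c 0)"
proof (induction i)
  case 0 then show ?case by simp
next
  case (Suc i)
  then have "rk (c (Suc i)) < rk (c i)" using rk_strict[OF rf] assms(2) by simp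
  then show ?case using Suc by simp
qed

lemma rank_up:
  fixes rk :: "'a::{finite,bounded_lattice} \<Rightarrow> nat"
  assumes rf: "rank_function rk" and "y \<le> x"
  shows "rank_on {v. y \<le> v} (\<le>) y x = rk x - rk y"
  unfolding rank_on_def
proof (rule Max_eqI)
  let ?A = "{n. \<exists>c::nat \<Rightarrow> 'a. c 0 = y \<and> c n = x \<and> (\<forall>i\<le>n. c i \<in> {v. y \<le> v}) \<and>
       (\<forall>i<n. c i \<le> c (Suc i) \<and> c i \<noteq> c (Suc i))}"
  show ub: "n \<le> rk x - rk y" if "n \<in> ?A" for n
  proof -
    from that obtain c where c: "c 0 = y" "c n = x" "\<forall>i<n. c i \<le> c (Suc i) \<and> c i \<noteq> c (Suc i)" by blast
    have "\<forall>i<n. c i < c (Suc i)" using c(3) by (auto simp: order.strict_iff_order)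
    from chain_rk[OF rf this, of n] c show ?thesis by simp
  qed
  show "finite ?A" by (rule finite_subset[of _ "{..rk x - rk y}"]) (use ub in auto)
  obtain c n where c: "c 0 = y" "c n = x" "\<forall>i<n. c i < c (Suc i)" "rk x = rk y + n"
    using chain_exists[OF rf assms(2)] by blast
  have "\<forall>i\<le>n. c i \<in> {v. y \<le> v}" using chain_mono[OF c(3), of 0] c(1) by auto
  then have "n \<in> ?A" unfolding mem_Collect_eq using c
    by (intro exI[of _ c]) (auto simp: order.strict_iff_order)
  then show "rk x - rk y \<in> ?A" using c(4) by simp
qed

lemma rank_down:
  fixes rk :: "'a::{finite,bounded_lattice} \<Rightarrow> nat"
  assumes rf: "rank_function rk" and "x \<le> y"
  shows "rank_on {v. v \<le> y} (\<lambda>a b. b \<le> a) y x = rk y - rk x"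
  unfolding rank_on_def
proof (rule Max_eqI)
  let ?A = "{n. \<exists>c::nat \<Rightarrow> 'a. c 0 = y \<and> c n = x \<and> (\<forall>i\<le>n. c i \<in> {v. v \<le> y}) \<and>
       (\<forall>i<n. c (Suc i) \<le> c i \<and> c i \<noteq> c (Suc i))}"
  show ub: "n \<le> rk y - rk x" if "n \<in> ?A" for n
  proof -
    from that obtain c where c: "c 0 = y" "c n = x" "\<forall>i<n. c (Suc i) \<le> c i \<and> c i \<noteq> c (Suc i)" by blast
    have "\<forall>i<n. c (Suc i) < c i" using c(3) by (auto simp: order.strict_iff_order)
    from chain_rk_down[OF rf this, of n] c show ?thesis by simp
  qed
  show "finite ?A" by (rule finite_subset[of _ "{..rk y - rk x}"]) (use ub in auto)
  obtain d n where d: "d 0 = x" "d n = y" "\<forall>i<n. d i < d (Suc i)" "rk y = rk x + n"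
    using chain_exists[OF rf assms(2)] by blast
  define c where "c = (\<lambda>i. d (n - i))"
  have "\<forall>i\<le>n. c i \<in> {v. v \<le> y}" using chain_mono[OF d(3)] d(2) by (auto simp: c_def)
  moreover have "\<forall>i<n. c (Suc i) < c i"
  proof (intro allI impI)
    fix i assume "i < n"
    then have "n - i = Suc (n - Suc i)" by simp
    then show "c (Suc i) < c i" using d(3) \<open>i < n\<close> by (simp add: c_def)
  qed
  moreover have "c 0 = y" "c n = x" using d by (auto simp: c_def)
  ultimately have "n \<in> ?A" unfolding mem_Collect_eq
    by (intro exI[of _ c]) (auto simp: order.strict_iff_order)
  then show "rk y - rk x \<in> ?A" using d(4) by simp
qed


definition mob_prop :: "'a set \<Rightarrow> ('a \<Rightarrow> 'a \<Rightarrow> bool) \<Rightarrow> ('a \<Rightarrow> 'a \<Rightarrow> int) \<Rightarrow> bool" where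
  "mob_prop S le m \<longleftrightarrow> (\<forall>u\<in>S. \<forall>v\<in>S. le u v \<longrightarrow>
          (u = v \<longrightarrow> m u v = 1) \<and>
          (u \<noteq> v \<longrightarrow> (\<Sum>a\<in>{a\<in>S. le u a \<and> le a v}. m u a) = 0)) \<and>
      (\<forall>u v. \<not> (u \<in> S \<and> v \<in> S \<and> le u v) \<longrightarrow> m u v = 0)"

lemma mob_unique:
  assumes fin: "finite S"
    and rfl: "\<forall>a\<in>S. le a a"
    and trans: "\<forall>a\<in>S. \<forall>b\<in>S. \<forall>c\<in>S. le a b \<longrightarrow> le b c \<longrightarrow> le a c"
    and antis: "\<forall>a\<in>S. \<forall>b\<in>S. le a b \<longrightarrow> le b a \<longrightarrow> a = b"
    and P1: "mob_prop S le m1" and P2: "mob_prop S le m2"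
  shows "m1 u v = m2 u v"
proof (induction "card {a\<in>S. le u a \<and> le a v}" arbitrary: v rule: less_induct)
  case less
  show ?case
  proof (cases "u \<in> S \<and> v \<in> S \<and> le u v")
    case False
    then show ?thesis using P1 P2 unfolding mob_prop_def by metis
  next
    case True
    show ?thesis
    proof (cases "u = v")
      case True
      then show ?thesis using P1 P2 \<open>u \<in> S \<and> v \<in> S \<and> le u v\<close> unfolding mob_prop_def by metis
    next
      case False
      let ?I = "\<lambda>v. {a\<in>S. le u a \<and> le a v}"
      have vI: "v \<in> ?I v" using True rfl by auto
      have finI: "finite (?I v)" using fin by auto
      have eq: "m1 u a = m2 u a" if a: "a \<in> ?I v - {v}" for a
      proof -
        have "?I a \<subseteq> ?I v" using a trans True by blast
        moreover have "v \<notin> ?I a" using a antis True by blast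
        ultimately have "?I a \<subset> ?I v" using vI by blast
        then have "card (?I a) < card (?I v)" using finI by (simp add: psubset_card_mono)
        then show ?thesis using less.hyps by blast
      qed
      have s1: "(\<Sum>a\<in>?I v. m1 u a) = 0" "(\<Sum>a\<in>?I v. m2 u a) = 0"
        using P1 P2 True False unfolding mob_prop_def by auto
      have "(\<Sum>a\<in>?I v. m1 u a) = m1 u v + (\<Sum>a\<in>?I v - {v}. m1 u a)"
        using finI vI by (simp add: sum.remove)
      moreover have "(\<Sum>a\<in>?I v. m2 u a) = m2 u v + (\<Sum>a\<in>?I v - {v}. m2 u a)"
        using finI vI by (simp add: sum.remove)
      moreover have "(\<Sum>a\<in>?I v - {v}. m1 u a) = (\<Sum>a\<in>?I v - {v}. m2 u a)"
        using eq by (rule sum.cong[OF refl])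
      ultimately show ?thesis using s1 by linarith
    qed
  qed
qed

lemma mobius_on_eqI:
  assumes fin: "finite S"
    and rfl: "\<forall>a\<in>S. le a a"
    and trans: "\<forall>a\<in>S. \<forall>b\<in>S. \<forall>c\<in>S. le a b \<longrightarrow> le b c \<longrightarrow> le a c"
    and antis: "\<forall>a\<in>S. \<forall>b\<in>S. le a b \<longrightarrow> le b a \<longrightarrow> a = b"
    and P: "mob_prop S le M"
  shows "mobius_on S le = M"
proof -
  have e: "mobius_on S le = (THE m. mob_prop S le m)" by (simp add: mobius_on_def mob_prop_def)
  show ?thesis unfolding e
  proof (rule the_equality)
    show "mob_prop S le M" using P .
  next
    fix m assume "mob_prop S le m"
    then show "m = M" by (intro ext) (rule mob_unique[OF assms(1-4) _ P])
  qed
qed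


lemma mobius_up:
  fixes y x :: "'a::{finite,order}"
  assumes "y \<le> x"
  shows "mobius_on {v. y \<le> v} (\<le>) y x = mu y x"
proof -
  let ?M = "\<lambda>u v. if y \<le> u \<and> y \<le> v \<and> u \<le> v then mu u v else 0"
  have "mob_prop {v. y \<le> v} (\<le>) ?M"
    unfolding mob_prop_def
  proof (intro conjI ballI impI allI)
    fix u v :: 'a
    assume u: "u \<in> {v. y \<le> v}" and v: "v \<in> {v. y \<le> v}" and uv: "u \<le> v"
    show "u = v \<Longrightarrow> ?M u v = 1" using u by (simp add: mu.simps)
    assume "u \<noteq> v"
    have "{a \<in> {v. y \<le> v}. u \<le> a \<and> a \<le> v} = {a. u \<le> a \<and> a \<le> v}"
      using u by auto
    then have "(\<Sum>a\<in>{a \<in> {v. y \<le> v}. u \<le> a \<and> a \<le> v}. ?M u a) = (\<Sum>a\<in>{a. u \<le> a \<and> a \<le> v}. mu u a)"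
      using u by (auto intro!: sum.cong)
    also have "\<dots> = 0" using mu_sum[OF uv] \<open>u \<noteq> v\<close> by simp
    finally show "(\<Sum>a\<in>{a \<in> {v. y \<le> v}. u \<le> a \<and> a \<le> v}. ?M u a) = 0" .
  next
    fix u v :: 'a
    assume "\<not> (u \<in> {v. y \<le> v} \<and> v \<in> {v. y \<le> v} \<and> u \<le> v)"
    then show "?M u v = 0" by auto
  qed
  then have "mobius_on {v. y \<le> v} (\<le>) = ?M"
    by (intro mobius_on_eqI) auto
  then show ?thesis using assms by simp
qed

lemma mobius_down:
  fixes y x :: "'a::{finite,order}"
  assumes "x \<le> y"
  shows "mobius_on {v. v \<le> y} (\<lambda>a b. b \<le> a) y x = mu' x y"
proof -
  let ?M = "\<lambda>u v. if u \<le> y \<and> v \<le> y \<and> v \<le> u then mu' v u else 0"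
  have "mob_prop {v. v \<le> y} (\<lambda>a b. b \<le> a) ?M"
    unfolding mob_prop_def
  proof (intro conjI ballI impI allI)
    fix u v :: 'a
    assume u: "u \<in> {v. v \<le> y}" and v: "v \<in> {v. v \<le> y}" and uv: "v \<le> u"
    show "u = v \<Longrightarrow> ?M u v = 1" using u by (simp add: mu'.simps)
    assume "u \<noteq> v"
    have "{a \<in> {v. v \<le> y}. a \<le> u \<and> v \<le> a} = {a. v \<le> a \<and> a \<le> u}"
      using u by auto
    then have "(\<Sum>a\<in>{a \<in> {v. v \<le> y}. a \<le> u \<and> v \<le> a}. ?M u a) = (\<Sum>a\<in>{a. v \<le> a \<and> a \<le> u}. mu' a u)"
      using u by (auto intro!: sum.cong)
    also have "\<dots> = 0" using mu'_sum[OF uv] \<open>u \<noteq> v\<close> by simp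
    finally show "(\<Sum>a\<in>{a \<in> {v. v \<le> y}. a \<le> u \<and> v \<le> a}. ?M u a) = 0" .
  next
    fix u v :: 'a
    assume "\<not> (u \<in> {v. v \<le> y} \<and> v \<in> {v. v \<le> y} \<and> v \<le> u)"
    then show "?M u v = 0" by auto
  qed
  then have "mobius_on {v. v \<le> y} (\<lambda>a b. b \<le> a) = ?M"
    by (intro mobius_on_eqI) auto
  then show ?thesis using assms by simp
qed

definition J_prop :: "('a::order \<Rightarrow> 'a \<Rightarrow> 'a \<Rightarrow> int) \<Rightarrow> bool" where
  "J_prop J \<longleftrightarrow> (\<forall>x y z. x \<le> y \<and> y \<le> z \<longrightarrow>
         (\<Sum>a\<in>{a. x \<le> a \<and> a \<le> y}. \<Sum>b\<in>{b. y \<le> b \<and> b \<le> z}. J a y b)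
           = (if x = y \<and> y = z then 1 else 0)) \<and>
      (\<forall>x y z. \<not> (x \<le> y \<and> y \<le> z) \<longrightarrow> J x y z = 0)"

lemma J_unique:
  fixes J1 J2 :: "'a::{finite,order} \<Rightarrow> 'a \<Rightarrow> 'a \<Rightarrow> int"
  assumes P1: "J_prop J1" and P2: "J_prop J2"
  shows "J1 x y z = J2 x y z"
proof (induction "card {a. x \<le> a \<and> a \<le> y} + card {b. y \<le> b \<and> b \<le> z}" arbitrary: x z rule: less_induct)
  case less
  show ?case
  proof (cases "x \<le> y \<and> y \<le> z")
    case False
    then show ?thesis using P1 P2 unfolding J_prop_def by metis
  next
    case True
    define A where "A = {a. x \<le> a \<and> a \<le> y}"
    define B where "B = {b. y \<le> b \<and> b \<le> z}"
    have xz: "(x, z) \<in> A \<times> B" using True by (auto simp: A_def B_def)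
    have fin: "finite (A \<times> B)" by simp
    have eq: "J1 (fst p) y (snd p) = J2 (fst p) y (snd p)" if p: "p \<in> A \<times> B - {(x, z)}" for p
    proof -
      obtain a b where pab: "p = (a, b)" by (cases p)
      have a: "x \<le> a" "a \<le> y" and b: "y \<le> b" "b \<le> z" and ne: "a \<noteq> x \<or> b \<noteq> z"
        using p pab by (auto simp: A_def B_def)
      have s1: "{a'. a \<le> a' \<and> a' \<le> y} \<subseteq> A" using a by (auto simp: A_def)
      have s2: "{b'. y \<le> b' \<and> b' \<le> b} \<subseteq> B" using b by (auto simp: B_def)
      have c1: "card {a'. a \<le> a' \<and> a' \<le> y} \<le> card A" using s1 by (simp add: card_mono)
      have c2: "card {b'. y \<le> b' \<and> b' \<le> b} \<le> card B" using s2 by (simp add: card_mono)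
      have "card {a'. a \<le> a' \<and> a' \<le> y} < card A \<or> card {b'. y \<le> b' \<and> b' \<le> b} < card B"
      proof (cases "a = x")
        case False
        have "x \<in> A" "x \<notin> {a'. a \<le> a' \<and> a' \<le> y}" using True a False by (auto simp: A_def)
        then have "{a'. a \<le> a' \<and> a' \<le> y} \<subset> A" using s1 by blast
        then show ?thesis by (simp add: psubset_card_mono)
      next
        case True
        then have "b \<noteq> z" using ne by simp
        have "z \<in> B" "z \<notin> {b'. y \<le> b' \<and> b' \<le> b}" using \<open>x \<le> y \<and> y \<le> z\<close> b \<open>b \<noteq> z\<close> by (auto simp: B_def)
        then have "{b'. y \<le> b' \<and> b' \<le> b} \<subset> B" using s2 by blast
        then show ?thesis by (simp add: psubset_card_mono)
      qed
      then have "card {a'. a \<le> a' \<and> a' \<le> y} + card {b'. y \<le> b' \<and> b' \<le> b} < card A + card B"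
        using c1 c2 by linarith
      then have "J1 a y b = J2 a y b" using less.hyps unfolding A_def B_def by blast
      then show ?thesis using pab by simp
    qed
    have "(\<Sum>a\<in>A. \<Sum>b\<in>B. J1 a y b) = (\<Sum>p\<in>A \<times> B. J1 (fst p) y (snd p))"
      by (simp add: sum.cartesian_product split_def)
    moreover have "(\<Sum>a\<in>A. \<Sum>b\<in>B. J1 a y b) = (if x = y \<and> y = z then 1 else 0)"
      using P1 True unfolding J_prop_def A_def B_def by blast
    ultimately have S1: "(\<Sum>p\<in>A \<times> B. J1 (fst p) y (snd p)) = (if x = y \<and> y = z then 1 else 0)"
      by simp
    have "(\<Sum>a\<in>A. \<Sum>b\<in>B. J2 a y b) = (\<Sum>p\<in>A \<times> B. J2 (fst p) y (snd p))"
      by (simp add: sum.cartesian_product split_def)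
    moreover have "(\<Sum>a\<in>A. \<Sum>b\<in>B. J2 a y b) = (if x = y \<and> y = z then 1 else 0)"
      using P2 True unfolding J_prop_def A_def B_def by blast
    ultimately have S2: "(\<Sum>p\<in>A \<times> B. J2 (fst p) y (snd p)) = (if x = y \<and> y = z then 1 else 0)"
      by simp
    have "(\<Sum>p\<in>A \<times> B. J1 (fst p) y (snd p)) = J1 x y z + (\<Sum>p\<in>A \<times> B - {(x,z)}. J1 (fst p) y (snd p))"
      by (subst sum.remove[OF fin xz]) simp
    moreover have "(\<Sum>p\<in>A \<times> B. J2 (fst p) y (snd p)) = J2 x y z + (\<Sum>p\<in>A \<times> B - {(x,z)}. J2 (fst p) y (snd p))"
      by (subst sum.remove[OF fin xz]) simp
    moreover have "(\<Sum>p\<in>A \<times> B - {(x,z)}. J1 (fst p) y (snd p)) = (\<Sum>p\<in>A \<times> B - {(x,z)}. J2 (fst p) y (snd p))"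
      using eq by (rule sum.cong[OF refl])
    ultimately show ?thesis using S1 S2 by linarith
  qed
qed

lemma Jfun_eq:
  "(Jfun :: 'a::{finite,order} \<Rightarrow> 'a \<Rightarrow> 'a \<Rightarrow> int) = (\<lambda>x y z. if x \<le> y \<and> y \<le> z then mu' x y * mu y z else (0::int))"
  (is "_ = ?J0")
proof -
  have e: "(Jfun :: 'a \<Rightarrow> 'a \<Rightarrow> 'a \<Rightarrow> int) = (THE J. J_prop J)" by (simp add: Jfun_def J_prop_def)
  have P: "J_prop ?J0"
    unfolding J_prop_def
  proof (intro conjI allI impI)
    fix x y z :: 'a
    assume xyz: "x \<le> y \<and> y \<le> z"
    have "(\<Sum>a\<in>{a. x \<le> a \<and> a \<le> y}. \<Sum>b\<in>{b. y \<le> b \<and> b \<le> z}. ?J0 a y b)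
        = (\<Sum>a\<in>{a. x \<le> a \<and> a \<le> y}. \<Sum>b\<in>{b. y \<le> b \<and> b \<le> z}. mu' a y * mu y b)"
      by (auto intro!: sum.cong)
    also have "\<dots> = (\<Sum>a\<in>{a. x \<le> a \<and> a \<le> y}. mu' a y) * (\<Sum>b\<in>{b. y \<le> b \<and> b \<le> z}. mu y b)"
      by (simp add: sum_product)
    also have "\<dots> = (if x = y \<and> y = z then 1 else 0)"
      using mu_sum[of y z] mu'_sum[of x y] xyz by simp
    finally show "(\<Sum>a\<in>{a. x \<le> a \<and> a \<le> y}. \<Sum>b\<in>{b. y \<le> b \<and> b \<le> z}. ?J0 a y b) = (if x = y \<and> y = z then 1 else 0)" .
  qed auto
  show ?thesis unfolding e
  proof (rule the_equality)
    show "J_prop ?J0" using P .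
  next
    fix J :: "'a \<Rightarrow> 'a \<Rightarrow> 'a \<Rightarrow> int" assume "J_prop J"
    then show "J = ?J0" by (intro ext) (rule J_unique[OF _ P])
  qed
qed


lemma charpoly_up:
  fixes rk :: "'a::{finite,bounded_lattice} \<Rightarrow> nat" and t :: "'b::field"
  assumes rf: "rank_function rk"
  shows "charpoly_on {x. y \<le> x} (\<le>) y t =
     (\<Sum>x\<in>{x. y \<le> x}. of_int (mu y x) * t ^ (rk top - rk x))"
proof -
  let ?S = "{x. y \<le> x}"
  have im: "rank_on ?S (\<le>) y ` ?S = (\<lambda>x. rk x - rk y) ` ?S"
    using rank_up[OF rf] by (intro image_cong) auto
  have mx: "Max (rank_on ?S (\<le>) y ` ?S) = rk top - rk y"
    unfolding im
  proof (rule Max_eqI)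
    show "finite ((\<lambda>x. rk x - rk y) ` ?S)" by simp
    show "b \<le> rk top - rk y" if "b \<in> (\<lambda>x. rk x - rk y) ` ?S" for b
      using that rk_mono[OF rf, of _ top] by (auto intro: diff_le_mono)
    show "rk top - rk y \<in> (\<lambda>x. rk x - rk y) ` ?S" by auto
  qed
  show ?thesis unfolding charpoly_on_def mx
  proof (rule sum.cong[OF refl])
    fix x assume "x \<in> ?S"
    then have "y \<le> x" by simp
    then have "rk y \<le> rk x" "rk x \<le> rk top" using rk_mono[OF rf] by auto
    then show "of_int (mobius_on ?S (\<le>) y x) * t ^ (rk top - rk y - rank_on ?S (\<le>) y x) =
        of_int (mu y x) * t ^ (rk top - rk x)"
      using mobius_up[OF \<open>y \<le> x\<close>] rank_up[OF rf \<open>y \<le> x\<close>] by simp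
  qed
qed

lemma charpoly_down:
  fixes rk :: "'a::{finite,bounded_lattice} \<Rightarrow> nat" and s :: "'b::field"
  assumes rf: "rank_function rk"
  shows "charpoly_on {x. x \<le> y} (\<lambda>a b. b \<le> a) y s =
     (\<Sum>x\<in>{x. x \<le> y}. of_int (mu' x y) * s ^ rk x)"
proof -
  let ?S = "{x. x \<le> y}"
  have im: "rank_on ?S (\<lambda>a b. b \<le> a) y ` ?S = (\<lambda>x. rk y - rk x) ` ?S"
    using rank_down[OF rf] by (intro image_cong) auto
  have rb: "rk bot = 0" using rf by (simp add: rank_function_def)
  have mx: "Max (rank_on ?S (\<lambda>a b. b \<le> a) y ` ?S) = rk y"
    unfolding im
  proof (rule Max_eqI)
    show "finite ((\<lambda>x. rk y - rk x) ` ?S)" by simp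
    show "b \<le> rk y" if "b \<in> (\<lambda>x. rk y - rk x) ` ?S" for b
      using that by auto
    have "rk y = rk y - rk bot" using rb by simp
    then show "rk y \<in> (\<lambda>x. rk y - rk x) ` ?S" by auto
  qed
  show ?thesis unfolding charpoly_on_def mx
  proof (rule sum.cong[OF refl])
    fix x assume "x \<in> ?S"
    then have "x \<le> y" by simp
    then have "rk x \<le> rk y" using rk_mono[OF rf] by auto
    then show "of_int (mobius_on ?S (\<lambda>a b. b \<le> a) y x) * s ^ (rk y - rank_on ?S (\<lambda>a b. b \<le> a) y x) =
        of_int (mu' x y) * s ^ rk x"
      using mobius_down[OF \<open>x \<le> y\<close>] rank_down[OF rf \<open>x \<le> y\<close>] by simp
  qed
qed

theorem proposition6p10:
  fixes rk :: "'a::{finite,bounded_lattice} \<Rightarrow> nat"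
    and t :: "'b::field"
  assumes "rank_function rk"
    and "t \<noteq> 0"
  shows "Mpoly rk t =
    t ^ rk top * (\<Sum>y\<in>(UNIV :: 'a set).
       t ^ (rk top - rk y)
       * charpoly_on {x. y \<le> x} (\<le>) y t
       * charpoly_on {x. x \<le> y} (\<lambda>a b. b \<le> a) y (inverse t))"
proof -
  note rf = assms(1)
  define r where "r = rk top"
  define f where "f = (\<lambda>x y z. of_int (mu' x y * mu y z) * t ^ (3 * r - rk x - rk y - rk z))"
  let ?T = "{(x,y,z). x \<le> y \<and> y \<le> z} :: ('a \<times> 'a \<times> 'a) set"
  let ?U = "SIGMA y:(UNIV :: 'a set). SIGMA x:{x. x \<le> y}. {z. y \<le> z}"
  have "Mpoly rk t = (\<Sum>(x,y,z)\<in>?T. f x y z)"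
    unfolding Mpoly_def Jfun_eq f_def r_def by (intro sum.cong) auto
  also have "\<dots> = (\<Sum>(y,x,z)\<in>?U. f x y z)"
    by (rule sum.reindex_bij_witness[where i="\<lambda>(y,x,z). (x,y,z)" and j="\<lambda>(x,y,z). (y,x,z)"]) auto
  also have "\<dots> = (\<Sum>y\<in>UNIV. \<Sum>x\<in>{x. x \<le> y}. \<Sum>z\<in>{z. y \<le> z}. f x y z)"
    by (simp add: sum.Sigma split_def)
  also have "\<dots> = t ^ r * (\<Sum>y\<in>(UNIV :: 'a set).
       t ^ (r - rk y)
       * charpoly_on {x. y \<le> x} (\<le>) y t
       * charpoly_on {x. x \<le> y} (\<lambda>a b. b \<le> a) y (inverse t))"
    unfolding sum_distrib_left
  proof (rule sum.cong[OF refl])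
    fix y :: 'a
    have "t ^ r * (t ^ (r - rk y) * charpoly_on {x. y \<le> x} (\<le>) y t
       * charpoly_on {x. x \<le> y} (\<lambda>a b. b \<le> a) y (inverse t))
      = t ^ r * (t ^ (r - rk y) * ((\<Sum>z\<in>{z. y \<le> z}. of_int (mu y z) * t ^ (r - rk z))
          * (\<Sum>x\<in>{x. x \<le> y}. of_int (mu' x y) * inverse t ^ rk x)))"
      unfolding charpoly_up[OF rf] charpoly_down[OF rf] r_def by (simp add: mult.assoc)
    also have "\<dots> = (\<Sum>x\<in>{x. x \<le> y}. \<Sum>z\<in>{z. y \<le> z}.
        t ^ r * (t ^ (r - rk y) * ((of_int (mu' x y) * inverse t ^ rk x) * (of_int (mu y z) * t ^ (r - rk z)))))"
    proof -
      have "(\<Sum>z\<in>{z. y \<le> z}. of_int (mu y z) * t ^ (r - rk z))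
          * (\<Sum>x\<in>{x. x \<le> y}. of_int (mu' x y) * inverse t ^ rk x)
        = (\<Sum>x\<in>{x. x \<le> y}. \<Sum>z\<in>{z. y \<le> z}. (of_int (mu' x y) * inverse t ^ rk x) * (of_int (mu y z) * t ^ (r - rk z)))"
        by (subst mult.commute) (rule sum_product)
      then show ?thesis by (simp add: sum_distrib_left)
    qed
    also have "\<dots> = (\<Sum>x\<in>{x. x \<le> y}. \<Sum>z\<in>{z. y \<le> z}. f x y z)"
    proof (intro sum.cong[OF refl])
      fix x z assume "x \<in> {x. x \<le> y}" "z \<in> {z. y \<le> z}"
      then have le: "rk x \<le> rk y" "rk y \<le> rk z" "rk z \<le> r"
        using rk_mono[OF rf] unfolding r_def by auto
      have e3: "3 * r - rk x - rk y - rk z = (r - rk x) + (r - rk y) + (r - rk z)" using le by simp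
      have "t ^ r * inverse t ^ rk x = t ^ (r - rk x)"
        using power_diff_conv_inverse[OF assms(2), of "rk x" r] le by simp
      then show "t ^ r * (t ^ (r - rk y) * ((of_int (mu' x y) * inverse t ^ rk x) * (of_int (mu y z) * t ^ (r - rk z))))
          = f x y z"
        unfolding f_def e3 power_add
        by (simp add: ac_simps)
    qed
    finally show "(\<Sum>x\<in>{x. x \<le> y}. \<Sum>z\<in>{z. y \<le> z}. f x y z) =
       t ^ r * (t ^ (r - rk y) * charpoly_on {x. y \<le> x} (\<le>) y t
       * charpoly_on {x. x \<le> y} (\<lambda>a b. b \<le> a) y (inverse t))" by simp
  qed
  finally show ?thesis unfolding r_def .
qed

end
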